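(* Let $\mathcal{X}$ be a set, let the side-information sets be constant, $\mathcal{X}_1=\mathcal{X}_2=\cdots=\mathcal{X}$ (independent of the history), and let $\mathcal{F}$ be a class of functions $\mathcal{X}\to[0,1]$. Then the following are equivalent: (i) the minimax regret is sublinear, i.e. $\frac1nV_n(\mathcal{F})\to0$ as $n\to\infty$; (ii) the sequential dimension $\mathrm{fat}_\beta(\mathcal{F},\mathcal{X})$ is finite for every $\beta>0$.
   Context: Logarithmic loss: $\ell(\hat y,y)=-\mathbf{1}\{y=1\}\log\hat y-\mathbf{1}\{y=0\}\log(1-\hat y)$. Minimax regret (with constant side-information set $\mathcal{X}$): $$V_n(\mathcal{F})=\sup_{x_1\in\mathcal{X}}\inf_{\hat y_1\in[0,1]}\sup_{p_1\in[0,1]}\mathbb{E}_{y_1\sim p_1}\cdots\sup_{x_n\in\mathcal{X}}\inf_{\hat y_n\in[0,1]}\sup_{p_n\in[0,1]}\mathbb{E}_{y_n\sim p_n}\Big[\sum_{t=1}^n\ell(\hat y_t,y_t)-\inf_{f\in\mathcal{F}}\sum_{t=1}^n\ell(f(x_t),y_t)\Big],$$ where $y_t\sim p_t$ is Bernoulli with $P(y_t=1)=p_t$. An $\mathcal{X}$-valued tree of depth $d$ is a sequence of maps $\mathbf{x}_t:\{0,1\}^{t-1}\to\mathcal{X}$, $t=1,\dots,d$, with $\mathbf{x}_t(y)=\mathbf{x}_t(y_1,\dots,y_{t-1})$. $\mathcal{F}$ shatters at scale $\beta>0$ an $\mathcal{X}$-valued tree $\mathbf{x}$ of depth $d$ if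 there is an $\mathbb{R}$-valued witness tree $\mathbf{s}$ of depth $d$ such that for every $y\in\{0,1\}^d$ there is $f\in\mathcal{F}$ with $(2y_t-1)(f(\mathbf{x}_t(y))-\mathbf{s}_t(y))\ge\beta/2$ for all $t=1,\dots,d$. The sequential fat-shattering dimension $\mathrm{fat}_\beta(\mathcal{F},\mathcal{X})$ is the largest depth of an $\mathcal{X}$-valued tree shattered by $\mathcal{F}$ at scale $\beta$. *)

theory Defs
  imports "HOL-Analysis.Analysis"
begin

text \<open>Logarithmic loss, extended-real valued (outcome True means y = 1).
  log 0 is taken as minus infinity, so the loss is +infinity at the endpoints.\<close>
definition logloss :: "real \<Rightarrow> bool \<Rightarrow> ereal" where
  "logloss yh y =
     (if y then (if yh = 0 then \<infinity> else ereal (- ln yh))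
      else (if yh = 1 then \<infinity> else ereal (- ln (1 - yh))))"

text \<open>Regret of a complete history (list of rounds (x_t, yhat_t, y_t)) against the class F.\<close>
definition regret :: "('a \<Rightarrow> real) set \<Rightarrow> ('a \<times> real \<times> bool) list \<Rightarrow> ereal" where
  "regret F h =
     (\<Sum>t<length h. logloss (fst (snd (h ! t))) (snd (snd (h ! t))))
     - (INF f\<in>F. \<Sum>t<length h. logloss (f (fst (h ! t))) (snd (snd (h ! t))))"

primrec game_val :: "'a set \<Rightarrow> ('a \<Rightarrow> real) set \<Rightarrow> nat \<Rightarrow> ('a \<times> real \<times> bool) list \<Rightarrow> ereal" where
  "game_val X F 0 h = regret F h"
| "game_val X F (Suc k) h =
     (SUP x\<in>X. INF yh\<in>{0..1}. SUP p\<in>{0..1}.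
        ereal p * game_val X F k (h @ [(x, yh, True)])
        + ereal (1 - p) * game_val X F k (h @ [(x, yh, False)]))"

definition minimax_regret :: "'a set \<Rightarrow> ('a \<Rightarrow> real) set \<Rightarrow> nat \<Rightarrow> ereal" where
  "minimax_regret X F n = game_val X F n []"

text \<open>Trees: an X-valued tree of depth d is a map from prefixes (y_1..y_{t-1}) to X;
  x_t(y) is represented as xt (take (t-1) y).  F shatters at scale beta.\<close>
definition seq_shatters :: "('a \<Rightarrow> real) set \<Rightarrow> 'a set \<Rightarrow> real \<Rightarrow> nat \<Rightarrow> bool" where
  "seq_shatters F X \<beta> d \<longleftrightarrow>
     (\<exists>(xt :: bool list \<Rightarrow> 'a) (st :: bool list \<Rightarrow> real).
        (\<forall>ys. length ys < d \<longrightarrow> xt ys \<in> X) \<and>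
        (\<forall>y. length y = d \<longrightarrow>
           (\<exists>f\<in>F. \<forall>t<d. (if y ! t then 1 else -1) * (f (xt (take t y)) - st (take t y)) \<ge> \<beta> / 2)))"

definition fat_finite :: "('a \<Rightarrow> real) set \<Rightarrow> 'a set \<Rightarrow> real \<Rightarrow> bool" where
  "fat_finite F X \<beta> \<longleftrightarrow> (\<exists>N. \<forall>d. seq_shatters F X \<beta> d \<longrightarrow> d \<le> N)"

end

theory Submission
  imports Defs "HOL-Real_Asymp.Real_Asymp"
begin


lemma seq_shattersI:
  assumes "\<And>ys. length ys < d \<Longrightarrow> xt ys \<in> X"
    and "\<And>y. length y = d \<Longrightarrow>
           (\<exists>f\<in>W. \<forall>t<d. (if y ! t then 1 else -1) * (f (xt (take t y)) - st (take t y)) \<ge> \<beta> / 2)"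
  shows "seq_shatters W X \<beta> d"
  unfolding seq_shatters_def using assms by blast

lemma shatters_mono_class:
  assumes "W \<subseteq> W'" "seq_shatters W X \<beta> d" shows "seq_shatters W' X \<beta> d"
proof -
  from assms(2) obtain xt st where X: "\<forall>ys. length ys < d \<longrightarrow> xt ys \<in> X"
    and S: "\<forall>y. length y = d \<longrightarrow>
           (\<exists>f\<in>W. \<forall>t<d. (if y ! t then 1 else -1) * (f (xt (take t y)) - st (take t y)) \<ge> \<beta> / 2)"
    unfolding seq_shatters_def by blast
  have "\<forall>y. length y = d \<longrightarrow>
           (\<exists>f\<in>W'. \<forall>t<d. (if y ! t then 1 else -1) * (f (xt (take t y)) - st (take t y)) \<ge> \<beta> / 2)"
    using S assms(1) by blast
  then show ?thesis unfolding seq_shatters_def using X by blast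
qed

lemma shatters_empty: "\<not> seq_shatters {} X \<beta> d"
proof
  assume "seq_shatters {} X \<beta> d"
  then obtain xt st where S: "\<forall>y. length y = d \<longrightarrow>
           (\<exists>f\<in>({}::('a\<Rightarrow>real) set). \<forall>t<d. (if y ! t then 1 else -1) * (f (xt (take t y)) - st (take t y)) \<ge> \<beta> / 2)"
    unfolding seq_shatters_def by blast
  have "length (replicate d True) = d" by simp
  from S[rule_format, OF this] show False by simp
qed

lemma shatters_zero: assumes "W \<noteq> {}" shows "seq_shatters W X \<beta> 0"
proof (rule seq_shattersI[where xt="\<lambda>_. undefined" and st="\<lambda>_. 0"])
  show "\<exists>f\<in>W. \<forall>t<0. (if y ! t then 1 else -1) * (f undefined - 0) \<ge> \<beta> / 2" for y
    using assms by auto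
qed simp

lemma shatters_down:
  assumes "seq_shatters W X \<beta> d" "d' \<le> d"
  shows "seq_shatters W X \<beta> d'"
proof -
  from assms(1) obtain xt st where X: "\<forall>ys. length ys < d \<longrightarrow> xt ys \<in> X"
    and S: "\<forall>y. length y = d \<longrightarrow>
           (\<exists>f\<in>W. \<forall>t<d. (if y ! t then 1 else -1) * (f (xt (take t y)) - st (take t y)) \<ge> \<beta> / 2)"
    unfolding seq_shatters_def by blast
  show ?thesis
  proof (rule seq_shattersI[where xt=xt and st=st])
    fix ys :: "bool list" assume "length ys < d'" then show "xt ys \<in> X" using X assms(2) by auto
  next
    fix y :: "bool list" assume ly: "length y = d'"
    define y' where "y' = y @ replicate (d - d') False"
    have "length y' = d" using ly assms(2) by (simp add: y'_def)
    then obtain f where f: "f \<in> W" "\<forall>t<d. (if y' ! t then 1 else -1) * (f (xt (take t y')) - st (take t y')) \<ge> \<beta> / 2"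
      using S by blast
    have "\<forall>t<d'. (if y ! t then 1 else -1) * (f (xt (take t y)) - st (take t y)) \<ge> \<beta> / 2"
    proof (intro allI impI)
      fix t assume t: "t < d'"
      have e: "take t y' = take t y" "y' ! t = y ! t" using t ly by (auto simp: y'_def nth_append)
      have "t < d" using t assms(2) by simp
      then have "(if y' ! t then 1 else -1) * (f (xt (take t y')) - st (take t y')) \<ge> \<beta> / 2"
        using f(2) by blast
      then show "(if y ! t then 1 else -1) * (f (xt (take t y)) - st (take t y)) \<ge> \<beta> / 2"
        unfolding e .
    qed
    then show "\<exists>f\<in>W. \<forall>t<d'. (if y ! t then 1 else -1) * (f (xt (take t y)) - st (take t y)) \<ge> \<beta> / 2"
      using f(1) by blast
  qed
qed

lemma shatters_glue:
  assumes x: "x \<in> X"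
    and Lo: "seq_shatters Lo X \<beta> d" and Up: "seq_shatters Up X \<beta> d"
    and LoW: "\<And>g. g \<in> Lo \<Longrightarrow> g \<in> W \<and> g x \<le> v"
    and UpW: "\<And>g. g \<in> Up \<Longrightarrow> g \<in> W \<and> g x \<ge> v + \<beta>"
  shows "seq_shatters W X \<beta> (Suc d)"
proof -
  from Lo obtain xL sL where XL: "\<forall>ys. length ys < d \<longrightarrow> xL ys \<in> X"
    and SL: "\<forall>y. length y = d \<longrightarrow>
           (\<exists>f\<in>Lo. \<forall>t<d. (if y ! t then 1 else -1) * (f (xL (take t y)) - sL (take t y)) \<ge> \<beta> / 2)"
    unfolding seq_shatters_def by blast
  from Up obtain xU sU where XU: "\<forall>ys. length ys < d \<longrightarrow> xU ys \<in> X"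
    and SU: "\<forall>y. length y = d \<longrightarrow>
           (\<exists>f\<in>Up. \<forall>t<d. (if y ! t then 1 else -1) * (f (xU (take t y)) - sU (take t y)) \<ge> \<beta> / 2)"
    unfolding seq_shatters_def by blast
  define xt where "xt ys = (if ys = [] then x else if hd ys then xU (tl ys) else xL (tl ys))" for ys
  define st where "st ys = (if ys = [] then v + \<beta>/2 else if hd ys then sU (tl ys) else sL (tl ys))" for ys
  show ?thesis
  proof (rule seq_shattersI[where xt=xt and st=st])
    fix ys :: "bool list" assume "length ys < Suc d" then show "xt ys \<in> X"
      using XL XU x by (cases ys) (auto simp: xt_def)
  next
    fix y :: "bool list" assume ly: "length y = Suc d"
    then obtain b y' where y: "y = b # y'" and ly': "length y' = d" by (cases y) auto
    show "\<exists>f\<in>W. \<forall>t<Suc d. (if y ! t then 1 else -1) * (f (xt (take t y)) - st (take t y)) \<ge> \<beta> / 2"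
    proof (cases b)
      case True
      then obtain f where f: "f \<in> Up" "\<forall>t<d. (if y' ! t then 1 else -1) * (f (xU (take t y')) - sU (take t y')) \<ge> \<beta> / 2"
        using SU ly' by blast
      have "\<forall>t<Suc d. (if y ! t then 1 else -1) * (f (xt (take t y)) - st (take t y)) \<ge> \<beta> / 2"
      proof (intro allI impI)
        fix t assume t: "t < Suc d"
        show "(if y ! t then 1 else -1) * (f (xt (take t y)) - st (take t y)) \<ge> \<beta> / 2"
        proof (cases t)
          case 0 then show ?thesis using UpW[OF f(1)] True y by (simp add: xt_def st_def)
        next
          case (Suc t') then show ?thesis using f(2) t True y by (simp add: xt_def st_def)
        qed
      qed
      then show ?thesis using UpW[OF f(1)] by blast
    next
      case False
      then obtain f where f: "f \<in> Lo" "\<forall>t<d. (if y' ! t then 1 else -1) * (f (xL (take t y')) - sL (take t y')) \<ge> \<beta> / 2"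
        using SL ly' by blast
      have "\<forall>t<Suc d. (if y ! t then 1 else -1) * (f (xt (take t y)) - st (take t y)) \<ge> \<beta> / 2"
      proof (intro allI impI)
        fix t assume t: "t < Suc d"
        show "(if y ! t then 1 else -1) * (f (xt (take t y)) - st (take t y)) \<ge> \<beta> / 2"
        proof (cases t)
          case 0 then show ?thesis using LoW[OF f(1)] False y by (simp add: xt_def st_def)
        next
          case (Suc t') then show ?thesis using f(2) t False y by (simp add: xt_def st_def)
        qed
      qed
      then show ?thesis using LoW[OF f(1)] by blast
    qed
  qed
qed



definition Dim :: "('a \<Rightarrow> real) set \<Rightarrow> 'a set \<Rightarrow> real \<Rightarrow> nat" where
  "Dim W X \<beta> = (GREATEST d. seq_shatters W X \<beta> d)"

lemma fat_bound:
  assumes "fat_finite F X \<beta>" "W \<subseteq> F"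
  obtains N where "\<And>d. seq_shatters W X \<beta> d \<Longrightarrow> d \<le> N"
proof -
  from assms(1) obtain N where N: "\<forall>d. seq_shatters F X \<beta> d \<longrightarrow> d \<le> N"
    unfolding fat_finite_def by blast
  show ?thesis
    by (rule that[of N]) (use N shatters_mono_class[OF assms(2)] in blast)
qed

lemma Dim_shatters:
  assumes "fat_finite F X \<beta>" "W \<subseteq> F" "W \<noteq> {}"
  shows "seq_shatters W X \<beta> (Dim W X \<beta>)"
proof -
  obtain N where N: "\<And>d. seq_shatters W X \<beta> d \<Longrightarrow> d \<le> N" using fat_bound[OF assms(1,2)] by blast
  show ?thesis unfolding Dim_def
    by (rule GreatestI_nat[where P="\<lambda>d. seq_shatters W X \<beta> d", OF shatters_zero[OF assms(3)]]) (use N in blast)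
qed

lemma Dim_ge:
  assumes "fat_finite F X \<beta>" "W \<subseteq> F" "seq_shatters W X \<beta> d"
  shows "d \<le> Dim W X \<beta>"
proof -
  obtain N where N: "\<And>d. seq_shatters W X \<beta> d \<Longrightarrow> d \<le> N" using fat_bound[OF assms(1,2)] by blast
  show ?thesis unfolding Dim_def
    by (rule Greatest_le_nat[where P="\<lambda>d. seq_shatters W X \<beta> d", OF assms(3)]) (use N in blast)
qed

lemma Dim_less:
  assumes "fat_finite F X \<beta>" "W \<subseteq> F" "W \<noteq> {}" "\<not> seq_shatters W X \<beta> k"
  shows "Dim W X \<beta> < k"
proof (rule ccontr)
  assume "\<not> Dim W X \<beta> < k"
  then have "k \<le> Dim W X \<beta>" by simp
  with shatters_down[OF Dim_shatters[OF assms(1-3)]] assms(4) show False by blast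
qed

definition soa :: "('a \<Rightarrow> real) set \<Rightarrow> 'a set \<Rightarrow> real \<Rightarrow> 'a \<Rightarrow> real" where
  "soa W X \<beta> x = \<beta> * real (GREATEST j. j \<le> nat \<lceil>1/\<beta>\<rceil> \<and>
      seq_shatters {g\<in>W. \<beta> * real j \<le> g x} X \<beta> (Dim W X \<beta>))"

lemma soa_props:
  assumes fat: "fat_finite F X \<beta>" and b: "\<beta> > 0"
    and rng: "\<forall>f\<in>F. \<forall>x\<in>X. 0 \<le> f x \<and> f x \<le> 1"
    and W: "W \<subseteq> F" "W \<noteq> {}" and x: "x \<in> X"
  shows "0 \<le> soa W X \<beta> x"
    "\<not> seq_shatters {g\<in>W. soa W X \<beta> x + \<beta> \<le> g x} X \<beta> (Dim W X \<beta>)"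
    "\<not> seq_shatters {g\<in>W. g x \<le> soa W X \<beta> x - \<beta>} X \<beta> (Dim W X \<beta>)"
proof -
  define J where "J = nat \<lceil>1/\<beta>\<rceil>"
  define D where "D = Dim W X \<beta>"
  define P where "P j \<longleftrightarrow> j \<le> J \<and> seq_shatters {g\<in>W. \<beta> * real j \<le> g x} X \<beta> D" for j
  define js where "js = (GREATEST j. P j)"
  have soa_eq: "soa W X \<beta> x = \<beta> * real js"
    unfolding soa_def js_def P_def J_def D_def by simp
  have W0: "{g\<in>W. \<beta> * real 0 \<le> g x} = W" using rng W x by auto
  have P0: "P 0" unfolding P_def D_def W0 using Dim_shatters[OF fat W] by simp
  have Pjs: "P js" unfolding js_def by (rule GreatestI_nat[where P=P, OF P0]) (auto simp: P_def)
  have Pge: "\<And>j. P j \<Longrightarrow> j \<le> js" unfolding js_def by (rule Greatest_le_nat[where P=P]) (auto simp: P_def)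
  show "0 \<le> soa W X \<beta> x" using b soa_eq by simp
  show up: "\<not> seq_shatters {g\<in>W. soa W X \<beta> x + \<beta> \<le> g x} X \<beta> (Dim W X \<beta>)"
  proof
    assume sh: "seq_shatters {g\<in>W. soa W X \<beta> x + \<beta> \<le> g x} X \<beta> (Dim W X \<beta>)"
    have eq: "soa W X \<beta> x + \<beta> = \<beta> * real (Suc js)" using soa_eq by (simp add: algebra_simps)
    show False
    proof (cases "Suc js \<le> J")
      case True
      then have "P (Suc js)" using sh unfolding P_def D_def eq by simp
      then show False using Pge by fastforce
    next
      case False
      then have "js = J" using Pjs unfolding P_def by simp
      have "1/\<beta> \<le> real J" unfolding J_def by linarith
      then have "1 \<le> \<beta> * real J" using b by (simp add: field_simps)
      then have "1 < \<beta> * real (Suc js)" using b \<open>js = J\<close> by (simp add: algebra_simps)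
      then have "{g\<in>W. soa W X \<beta> x + \<beta> \<le> g x} = {}" using rng W x eq by fastforce
      then show False using sh shatters_empty by metis
    qed
  qed
  show "\<not> seq_shatters {g\<in>W. g x \<le> soa W X \<beta> x - \<beta>} X \<beta> (Dim W X \<beta>)"
  proof
    assume sh: "seq_shatters {g\<in>W. g x \<le> soa W X \<beta> x - \<beta>} X \<beta> (Dim W X \<beta>)"
    have shu: "seq_shatters {g\<in>W. \<beta> * real js \<le> g x} X \<beta> (Dim W X \<beta>)"
      using Pjs unfolding P_def D_def by simp
    have "seq_shatters W X \<beta> (Suc (Dim W X \<beta>))"
      by (rule shatters_glue[OF x sh shu, where v="soa W X \<beta> x - \<beta>"]) (auto simp: soa_eq)
    then have "Suc (Dim W X \<beta>) \<le> Dim W X \<beta>" using Dim_ge[OF fat W(1)] by blast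
    then show False by simp
  qed
qed



definition vsp :: "('a \<Rightarrow> real) set \<Rightarrow> real \<Rightarrow> (nat \<Rightarrow> nat option) \<Rightarrow> 'a list \<Rightarrow> ('a \<Rightarrow> real) set" where
  "vsp F \<beta> m xs = {g\<in>F. \<forall>i<length xs. \<forall>k. m i = Some k \<longrightarrow> \<bar>g (xs!i) - \<beta> * real k\<bar> \<le> \<beta>}"

definition pred :: "('a \<Rightarrow> real) set \<Rightarrow> 'a set \<Rightarrow> real \<Rightarrow> (nat \<Rightarrow> nat option) \<Rightarrow> 'a list \<Rightarrow> 'a \<Rightarrow> real" where
  "pred F X \<beta> m xs x = min 1 (case m (length xs) of Some k \<Rightarrow> \<beta> * real k
      | None \<Rightarrow> soa (vsp F \<beta> m xs) X \<beta> x)"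

lemma vsp_agree: "(\<And>j. j < length xs \<Longrightarrow> m j = m' j) \<Longrightarrow> vsp F \<beta> m xs = vsp F \<beta> m' xs"
  unfolding vsp_def by auto

lemma pred_agree: "(\<And>j. j \<le> length xs \<Longrightarrow> m j = m' j) \<Longrightarrow> pred F X \<beta> m xs x = pred F X \<beta> m' xs x"
proof -
  assume a: "\<And>j. j \<le> length xs \<Longrightarrow> m j = m' j"
  then have "vsp F \<beta> m xs = vsp F \<beta> m' xs" by (intro vsp_agree) simp
  moreover have "m (length xs) = m' (length xs)" using a by simp
  ultimately show ?thesis unfolding pred_def by (simp only:)
qed

lemma pred_range:
  assumes b: "\<beta> > 0" and fat: "fat_finite F X \<beta>" and rng: "\<forall>f\<in>F. \<forall>x\<in>X. 0 \<le> f x \<and> f x \<le> 1"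
    and x: "x \<in> X"
  shows "0 \<le> pred F X \<beta> m xs x \<and> pred F X \<beta> m xs x \<le> 1"
proof (cases "m (length xs)")
  case None
  have "0 \<le> soa (vsp F \<beta> m xs) X \<beta> x"
  proof (cases "vsp F \<beta> m xs = {}")
    case True
    then show ?thesis unfolding soa_def using b by simp
  next
    case False
    show ?thesis by (rule soa_props(1)[OF fat b rng _ False x]) (auto simp: vsp_def)
  qed
  then show ?thesis using None unfolding pred_def by simp
next
  case (Some k) then show ?thesis using b unfolding pred_def by simp
qed

lemma vsp_sub: "vsp F \<beta> m xs \<subseteq> F" unfolding vsp_def by auto

lemma cover_step:
  assumes fat: "fat_finite F X \<beta>" and b: "\<beta> > 0"
    and rng: "\<forall>f\<in>F. \<forall>x\<in>X. 0 \<le> f x \<and> f x \<le> 1"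
    and f: "f \<in> F" and xs: "set xs \<subseteq> X"
  shows "t \<le> length xs \<Longrightarrow> \<exists>m. dom m \<subseteq> {..<t} \<and> ran m \<subseteq> {..nat \<lceil>1/\<beta>\<rceil>} \<and>
     f \<in> vsp F \<beta> m (take t xs) \<and>
     card (dom m) + Dim (vsp F \<beta> m (take t xs)) X \<beta> \<le> Dim F X \<beta> \<and>
     (\<forall>i<t. \<bar>pred F X \<beta> m (take i xs) (xs!i) - f (xs!i)\<bar> \<le> 3*\<beta>)"
proof (induction t)
  case 0
  have "vsp F \<beta> Map.empty (take 0 xs) = F" unfolding vsp_def by simp
  then show ?case using f by (intro exI[of _ Map.empty]) simp
next
  case (Suc t)
  then have tl: "t < length xs" by simp
  from Suc.IH tl obtain m where dom: "dom m \<subseteq> {..<t}" and ran: "ran m \<subseteq> {..nat \<lceil>1/\<beta>\<rceil>}"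
    and fV: "f \<in> vsp F \<beta> m (take t xs)"
    and cd: "card (dom m) + Dim (vsp F \<beta> m (take t xs)) X \<beta> \<le> Dim F X \<beta>"
    and pr: "\<forall>i<t. \<bar>pred F X \<beta> m (take i xs) (xs!i) - f (xs!i)\<bar> \<le> 3*\<beta>" by auto
  define x where "x = xs ! t"
  have xX: "x \<in> X" using xs tl unfolding x_def by (meson nth_mem subsetD)
  have tk: "take (Suc t) xs = take t xs @ [x]" using tl by (simp add: x_def take_Suc_conv_app_nth)
  define V where "V = vsp F \<beta> m (take t xs)"
  have mt: "m t = None" using dom by auto
  have VF: "V \<subseteq> F" unfolding V_def by (rule vsp_sub)
  have Vne: "V \<noteq> {}" using fV unfolding V_def by auto
  define r where "r = soa V X \<beta> x"
  have lt: "length (take t xs) = t" using tl by simp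
  have prt: "pred F X \<beta> m (take t xs) x = min 1 r"
    unfolding pred_def r_def V_def lt mt by simp
  have finD: "finite (dom m)" using dom finite_subset by blast
  show ?case
  proof (cases "\<bar>min 1 r - f x\<bar> \<le> 3*\<beta>")
    case True
    have Veq: "vsp F \<beta> m (take (Suc t) xs) = V"
      unfolding V_def vsp_def tk using mt tl by (auto simp: nth_append less_Suc_eq min_def)
    show ?thesis
    proof (intro exI[of _ m] conjI)
      show "dom m \<subseteq> {..<Suc t}" using dom by auto
      show "ran m \<subseteq> {..nat \<lceil>1/\<beta>\<rceil>}" by (fact ran)
      show "f \<in> vsp F \<beta> m (take (Suc t) xs)" using fV Veq V_def by simp
      show "card (dom m) + Dim (vsp F \<beta> m (take (Suc t) xs)) X \<beta> \<le> Dim F X \<beta>"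
        using cd Veq V_def by simp
      show "\<forall>i<Suc t. \<bar>pred F X \<beta> m (take i xs) (xs!i) - f (xs!i)\<bar> \<le> 3*\<beta>"
        using pr True prt by (auto simp: less_Suc_eq x_def)
    qed
  next
    case False
    define k where "k = nat \<lfloor>f x / \<beta>\<rfloor>"
    have fx: "0 \<le> f x" "f x \<le> 1" using rng f xX by auto
    have k1: "\<beta> * real k \<le> f x" "f x < \<beta> * real k + \<beta>"
    proof -
      have "0 \<le> f x / \<beta>" using fx b by simp
      then have rk: "real k = of_int \<lfloor>f x / \<beta>\<rfloor>" unfolding k_def by simp
      have "of_int \<lfloor>f x / \<beta>\<rfloor> \<le> f x / \<beta>" "f x / \<beta> < of_int \<lfloor>f x / \<beta>\<rfloor> + 1" by linarith+
      then have "of_int \<lfloor>f x / \<beta>\<rfloor> * \<beta> \<le> f x" "f x < (of_int \<lfloor>f x / \<beta>\<rfloor> + 1) * \<beta>"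
        using b by (simp_all only: pos_le_divide_eq pos_divide_less_eq)
      then show "\<beta> * real k \<le> f x" "f x < \<beta> * real k + \<beta>" unfolding rk
        by (simp_all add: algebra_simps)
    qed
    have kJ: "k \<le> nat \<lceil>1/\<beta>\<rceil>"
    proof -
      have "f x / \<beta> \<le> 1 / \<beta>" using fx b by (simp add: divide_right_mono)
      then have "\<lfloor>f x / \<beta>\<rfloor> \<le> \<lceil>1/\<beta>\<rceil>" by linarith
      then show ?thesis unfolding k_def by simp
    qed
    define m' where "m' = m(t \<mapsto> k)"
    have agree: "\<And>j. j < t \<Longrightarrow> m' j = m j" unfolding m'_def by simp
    define V' where "V' = {g\<in>V. \<bar>g x - \<beta> * real k\<bar> \<le> \<beta>}"
    have V'eq: "vsp F \<beta> m' (take (Suc t) xs) = V'"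
    proof -
      have "vsp F \<beta> m' (take t xs) = V" unfolding V_def by (rule vsp_agree) (simp add: agree)
      then show ?thesis unfolding V'_def tk
        using tl by (auto simp: vsp_def nth_append less_Suc_eq m'_def lt min_absorb2)
    qed
    have fV': "f \<in> V'" unfolding V'_def using fV k1 V_def by auto
    have V'ne: "V' \<noteq> {}" using fV' by auto
    have V'F: "V' \<subseteq> F" using VF unfolding V'_def by auto
    have close: "\<And>g. g \<in> V' \<Longrightarrow> \<bar>g x - f x\<bar> \<le> 2*\<beta>" unfolding V'_def using k1 by auto
    have notsh: "\<not> seq_shatters V' X \<beta> (Dim V X \<beta>)"
    proof (cases "f x > min 1 r + 3*\<beta>")
      case True
      then have "min 1 r < 1" using fx b by linarith
      then have "min 1 r = r" by simp
      have "V' \<subseteq> {g\<in>V. r + \<beta> \<le> g x}"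
        using close True \<open>min 1 r = r\<close> by (force simp: V'_def)
      then show ?thesis using soa_props(2)[OF fat b rng VF Vne xX] shatters_mono_class
        unfolding r_def by blast
    next
      case False2: False
      with False have "f x < min 1 r - 3*\<beta>" by linarith
      then have "f x < r - 3*\<beta>" by linarith
      have "V' \<subseteq> {g\<in>V. g x \<le> r - \<beta>}"
        using close \<open>f x < r - 3*\<beta>\<close> by (force simp: V'_def)
      then show ?thesis using soa_props(3)[OF fat b rng VF Vne xX] shatters_mono_class
        unfolding r_def by blast
    qed
    have Dl: "Dim V' X \<beta> < Dim V X \<beta>" by (rule Dim_less[OF fat V'F V'ne notsh])
    have dom': "dom m' = insert t (dom m)" unfolding m'_def by simp
    have cd': "card (dom m') = Suc (card (dom m))" unfolding dom' using finD mt by (simp add: domIff)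
    show ?thesis
    proof (intro exI[of _ m'] conjI)
      show "dom m' \<subseteq> {..<Suc t}" using dom dom' by auto
      show "ran m' \<subseteq> {..nat \<lceil>1/\<beta>\<rceil>}" using ran kJ mt unfolding m'_def by (auto simp: ran_def)
      show "f \<in> vsp F \<beta> m' (take (Suc t) xs)" using fV' V'eq by simp
      show "card (dom m') + Dim (vsp F \<beta> m' (take (Suc t) xs)) X \<beta> \<le> Dim F X \<beta>"
        using cd cd' Dl V'eq V_def by simp
      show "\<forall>i<Suc t. \<bar>pred F X \<beta> m' (take i xs) (xs!i) - f (xs!i)\<bar> \<le> 3*\<beta>"
      proof (intro allI impI)
        fix i assume i: "i < Suc t"
        show "\<bar>pred F X \<beta> m' (take i xs) (xs!i) - f (xs!i)\<bar> \<le> 3*\<beta>"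
        proof (cases "i < t")
          case True
          have "pred F X \<beta> m' (take i xs) (xs!i) = pred F X \<beta> m (take i xs) (xs!i)"
            by (rule pred_agree) (use True tl agree in auto)
          then show ?thesis using pr True by simp
        next
          case False
          then have it: "i = t" using i by simp
          have "pred F X \<beta> m' (take i xs) (xs!i) = min 1 (\<beta> * real k)"
            unfolding pred_def it lt m'_def by simp
          also have "\<dots> = \<beta> * real k" using k1 fx by simp
          finally show ?thesis using k1 b it x_def by simp
        qed
      qed
    qed
  qed
qed



definition Pr :: "real \<Rightarrow> bool \<Rightarrow> real" where "Pr q y = (if y then q else 1 - q)"

lemma logloss_alt: "logloss q y = (if Pr q y = 0 then \<infinity> else ereal (- ln (Pr q y)))"
  unfolding logloss_def Pr_def by auto

type_synonym 'a hist = "('a \<times> real \<times> bool) list"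

definition Wt :: "('i \<Rightarrow> 'a hist \<Rightarrow> 'a \<Rightarrow> real) \<Rightarrow> 'i \<Rightarrow> 'a hist \<Rightarrow> real" where
  "Wt ep L h = (\<Prod>i<length h. Pr (ep L (take i h) (fst (h!i))) (snd (snd (h!i))))"

definition sig :: "'i set \<Rightarrow> ('i \<Rightarrow> 'a hist \<Rightarrow> 'a \<Rightarrow> real) \<Rightarrow> 'a hist \<Rightarrow> 'a \<Rightarrow> real" where
  "sig I ep h x = (\<Sum>L\<in>I. Wt ep L h * ep L h x) / (\<Sum>L\<in>I. Wt ep L h)"

locale mixture =
  fixes I :: "'i set" and ep :: "'i \<Rightarrow> 'a hist \<Rightarrow> 'a \<Rightarrow> real" and c :: real
  assumes fin: "finite I" and ne: "I \<noteq> {}" and c: "0 < c"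
    and rng: "\<And>L h x. c \<le> ep L h x \<and> ep L h x \<le> 1 - c"
begin

lemma Pr_pos: "0 < Pr (ep L h x) y"
  using rng[of L h x] c unfolding Pr_def by auto

lemma Wt_pos: "0 < Wt ep L h"
  unfolding Wt_def by (rule prod_pos) (simp add: Pr_pos)

lemma Wt_snoc: "Wt ep L (h @ [(x, yh, y)]) = Wt ep L h * Pr (ep L h x) y"
  unfolding Wt_def by (simp add: nth_append)

lemma sumW_pos: "0 < (\<Sum>L\<in>I. Wt ep L h)"
  using fin ne by (intro sum_pos) (auto simp: Wt_pos)

lemma sig_range: "c \<le> sig I ep h x \<and> sig I ep h x \<le> 1 - c"
proof -
  let ?S = "\<Sum>L\<in>I. Wt ep L h"
  have "(\<Sum>L\<in>I. Wt ep L h * c) \<le> (\<Sum>L\<in>I. Wt ep L h * ep L h x)"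
    by (intro sum_mono mult_left_mono) (auto simp: rng less_imp_le[OF Wt_pos])
  moreover have "(\<Sum>L\<in>I. Wt ep L h * ep L h x) \<le> (\<Sum>L\<in>I. Wt ep L h * (1 - c))"
    by (intro sum_mono mult_left_mono) (auto simp: rng less_imp_le[OF Wt_pos])
  ultimately have a: "?S * c \<le> (\<Sum>L\<in>I. Wt ep L h * ep L h x)"
    "(\<Sum>L\<in>I. Wt ep L h * ep L h x) \<le> ?S * (1 - c)"
    by (simp_all add: sum_distrib_right)
  show ?thesis unfolding sig_def using a sumW_pos
    by (simp add: pos_le_divide_eq pos_divide_le_eq mult.commute)
qed

lemma Pr_sig: "Pr (sig I ep h x) y = (\<Sum>L\<in>I. Wt ep L (h @ [(x, yh, y)])) / (\<Sum>L\<in>I. Wt ep L h)"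
proof (cases y)
  case True
  then show ?thesis unfolding Pr_def sig_def by (simp add: Wt_snoc Pr_def)
next
  case False
  have "(\<Sum>L\<in>I. Wt ep L (h @ [(x, yh, y)])) = (\<Sum>L\<in>I. Wt ep L h) - (\<Sum>L\<in>I. Wt ep L h * ep L h x)"
    using False by (simp add: Wt_snoc Pr_def algebra_simps sum_subtractf)
  then show ?thesis using sumW_pos[of h] unfolding Pr_def sig_def using False
    by (simp add: diff_divide_distrib)
qed

lemma telescope:
  "(\<Prod>i<length h. Pr (sig I ep (take i h) (fst (h!i))) (snd (snd (h!i))))
     = (\<Sum>L\<in>I. Wt ep L h) / real (card I)"
proof (induction h rule: rev_induct)
  case Nil
  have "card I > 0" using fin ne by (simp add: card_gt_0_iff)
  then show ?case by (simp add: Wt_def)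
next
  case (snoc a h)
  obtain x yh y where a: "a = (x, yh, y)" by (cases a) auto
  have "(\<Prod>i<length (h @ [a]). Pr (sig I ep (take i (h @ [a])) (fst ((h @ [a])!i))) (snd (snd ((h @ [a])!i))))
      = (\<Prod>i<length h. Pr (sig I ep (take i h) (fst (h!i))) (snd (snd (h!i)))) * Pr (sig I ep h x) y"
    by (simp add: a nth_append)
  also have "\<dots> = (\<Sum>L\<in>I. Wt ep L h) / real (card I) * ((\<Sum>L\<in>I. Wt ep L (h @ [(x, yh, y)])) / (\<Sum>L\<in>I. Wt ep L h))"
    using snoc.IH Pr_sig[of h x y yh] by simp
  also have "\<dots> = (\<Sum>L\<in>I. Wt ep L (h @ [a])) / real (card I)"
    using sumW_pos[of h] by (simp add: a)
  finally show ?case .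
qed

lemma mix_bound:
  assumes L: "L \<in> I"
  shows "(\<Sum>i<length h. - ln (Pr (sig I ep (take i h) (fst (h!i))) (snd (snd (h!i)))))
     \<le> ln (real (card I)) + (\<Sum>i<length h. - ln (Pr (ep L (take i h) (fst (h!i))) (snd (snd (h!i)))))"
proof -
  have cI: "real (card I) > 0" using fin ne by (simp add: card_gt_0_iff)
  have sp: "\<And>i. 0 < Pr (sig I ep (take i h) (fst (h!i))) (snd (snd (h!i)))"
    using sig_range c unfolding Pr_def by (auto simp: le_diff_eq) (smt (verit, best) sig_range)+
  have "(\<Sum>i<length h. - ln (Pr (sig I ep (take i h) (fst (h!i))) (snd (snd (h!i)))))
      = - ln (\<Prod>i<length h. Pr (sig I ep (take i h) (fst (h!i))) (snd (snd (h!i))))"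
    using sp by (subst ln_prod) (auto simp: sum_negf dest: less_imp_neq[THEN not_sym])
  also have "\<dots> = ln (real (card I)) - ln (\<Sum>L\<in>I. Wt ep L h)"
    using cI sumW_pos[of h] by (simp add: telescope ln_div)
  also have "\<dots> \<le> ln (real (card I)) - ln (Wt ep L h)"
  proof -
    have "Wt ep L h \<le> (\<Sum>L\<in>I. Wt ep L h)"
      using fin L by (intro member_le_sum) (auto simp: less_imp_le[OF Wt_pos])
    then show ?thesis using Wt_pos[of L h] by simp
  qed
  also have "ln (Wt ep L h) = (\<Sum>i<length h. ln (Pr (ep L (take i h) (fst (h!i))) (snd (snd (h!i)))))"
    unfolding Wt_def by (subst ln_prod) (auto dest: less_imp_neq[THEN not_sym] simp: Pr_pos[THEN less_imp_neq, THEN not_sym])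
  finally show ?thesis by (simp add: sum_negf)
qed

end



lemma pred_range2:
  assumes b: "\<beta> > 0"
  shows "0 \<le> pred F X \<beta> m xs x \<and> pred F X \<beta> m xs x \<le> 1"
  using b unfolding pred_def soa_def by (auto split: option.split)

lemma cover_list:
  assumes fat: "fat_finite F X \<beta>" and b: "\<beta> > 0"
    and rng: "\<forall>f\<in>F. \<forall>x\<in>X. 0 \<le> f x \<and> f x \<le> 1"
    and f: "f \<in> F" and xs: "set xs \<subseteq> X" and n: "length xs = n"
  shows "\<exists>L. set L \<subseteq> {..n} \<times> {..nat \<lceil>1/\<beta>\<rceil>} \<and> length L = Dim F X \<beta> \<and>
     (\<forall>t<n. \<bar>pred F X \<beta> (map_of L) (take t xs) (xs!t) - f (xs!t)\<bar> \<le> 3*\<beta>)"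
proof -
  obtain m where dom: "dom m \<subseteq> {..<n}" and ran: "ran m \<subseteq> {..nat \<lceil>1/\<beta>\<rceil>}"
    and cd: "card (dom m) + Dim (vsp F \<beta> m (take n xs)) X \<beta> \<le> Dim F X \<beta>"
    and pr: "\<forall>i<n. \<bar>pred F X \<beta> m (take i xs) (xs!i) - f (xs!i)\<bar> \<le> 3*\<beta>"
    using cover_step[OF fat b rng f xs, of n] n by auto
  have finD: "finite (dom m)" using dom finite_subset by blast
  define L1 where "L1 = map (\<lambda>k. (k, the (m k))) (sorted_list_of_set (dom m))"
  define L where "L = L1 @ replicate (Dim F X \<beta> - card (dom m)) (n, 0::nat)"
  have mL1: "map_of L1 = m" unfolding L1_def by (rule map_of_map_keys) (simp add: finD)
  have agree: "map_of L j = m j" if "j < n" for j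
  proof -
    have "map_of (replicate q (n, 0::nat)) j = None" for q
      using that by (induction q) auto
    then show ?thesis unfolding L_def map_of_append mL1 by (simp add: map_add_def split: option.split)
  qed
  have setL: "set L \<subseteq> {..n} \<times> {..nat \<lceil>1/\<beta>\<rceil>}"
  proof -
    have "set L1 \<subseteq> {..n} \<times> {..nat \<lceil>1/\<beta>\<rceil>}"
    proof
      fix p assume "p \<in> set L1"
      then obtain k where k: "k \<in> dom m" "p = (k, the (m k))" unfolding L1_def using finD by auto
      then have "the (m k) \<in> ran m" by (auto simp: ran_def)
      then show "p \<in> {..n} \<times> {..nat \<lceil>1/\<beta>\<rceil>}" using k dom ran by auto
    qed
    then show ?thesis unfolding L_def by auto
  qed
  have lenL: "length L = Dim F X \<beta>"
    unfolding L_def L1_def using cd finD by simp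
  have "\<forall>t<n. \<bar>pred F X \<beta> (map_of L) (take t xs) (xs!t) - f (xs!t)\<bar> \<le> 3*\<beta>"
  proof (intro allI impI)
    fix t assume t: "t < n"
    have "pred F X \<beta> (map_of L) (take t xs) (xs!t) = pred F X \<beta> m (take t xs) (xs!t)"
      by (rule pred_agree) (use t n agree in auto)
    then show "\<bar>pred F X \<beta> (map_of L) (take t xs) (xs!t) - f (xs!t)\<bar> \<le> 3*\<beta>" using pr t by simp
  qed
  then show ?thesis using setL lenL by blast
qed

lemma ereal_convex_le:
  assumes "a \<le> ereal B" "b \<le> ereal B" "0 \<le> p" "p \<le> 1"
  shows "ereal p * a + ereal (1 - p) * b \<le> ereal B"
proof -
  have "ereal p * a \<le> ereal p * ereal B" using assms by (intro ereal_mult_left_mono) auto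
  moreover have "ereal (1 - p) * b \<le> ereal (1 - p) * ereal B" using assms by (intro ereal_mult_left_mono) auto
  ultimately have "ereal p * a + ereal (1 - p) * b \<le> ereal p * ereal B + ereal (1 - p) * ereal B"
    by (rule add_mono)
  also have "\<dots> = ereal B" by (simp add: algebra_simps)
  finally show ?thesis .
qed

lemma game_upper:
  assumes sr: "\<And>h x. 0 \<le> \<sigma> h x \<and> \<sigma> h x \<le> 1"
    and reg: "\<And>h. length h = n \<Longrightarrow> (\<forall>i<n. fst (h!i) \<in> X \<and> fst (snd (h!i)) = \<sigma> (take i h) (fst (h!i)))
        \<Longrightarrow> regret F h \<le> ereal B"
  shows "length h0 + k = n \<Longrightarrow> (\<forall>i<length h0. fst (h0!i) \<in> X \<and> fst (snd (h0!i)) = \<sigma> (take i h0) (fst (h0!i)))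
     \<Longrightarrow> game_val X F k h0 \<le> ereal B"
proof (induction k arbitrary: h0)
  case 0
  then show ?case using reg by simp
next
  case (Suc k)
  show ?case unfolding game_val.simps
  proof (rule SUP_least)
    fix x assume x: "x \<in> X"
    let ?y = "\<sigma> h0 x"
    have cons: "game_val X F k (h0 @ [(x, ?y, y)]) \<le> ereal B" for y
    proof (rule Suc.IH)
      show "length (h0 @ [(x, ?y, y)]) + k = n" using Suc.prems by simp
      show "\<forall>i<length (h0 @ [(x, ?y, y)]). fst ((h0 @ [(x, ?y, y)])!i) \<in> X \<and>
          fst (snd ((h0 @ [(x, ?y, y)])!i)) = \<sigma> (take i (h0 @ [(x, ?y, y)])) (fst ((h0 @ [(x, ?y, y)])!i))"
        using Suc.prems(2) x by (auto simp: nth_append less_Suc_eq)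
    qed
    have "(INF yh\<in>{0..1}. SUP p\<in>{0..1}. ereal p * game_val X F k (h0 @ [(x, yh, True)]) +
            ereal (1 - p) * game_val X F k (h0 @ [(x, yh, False)]))
        \<le> (SUP p\<in>{0..1}. ereal p * game_val X F k (h0 @ [(x, ?y, True)]) +
            ereal (1 - p) * game_val X F k (h0 @ [(x, ?y, False)]))"
      by (rule INF_lower) (use sr in auto)
    also have "\<dots> \<le> ereal B"
      by (rule SUP_least) (use cons ereal_convex_le in auto)
    finally show "(INF yh\<in>{0..1}. SUP p\<in>{0..1}. ereal p * game_val X F k (h0 @ [(x, yh, True)]) +
            ereal (1 - p) * game_val X F k (h0 @ [(x, yh, False)])) \<le> ereal B" .
  qed
qed

lemma regret_le:
  assumes le: "\<And>f. f \<in> F \<Longrightarrow> ereal A \<le> (\<Sum>t<length h. logloss (f (fst (h!t))) (snd (snd (h!t)))) + ereal B"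
    and A: "(\<Sum>t<length h. logloss (fst (snd (h!t))) (snd (snd (h!t)))) = ereal A"
  shows "regret F h \<le> ereal B"
proof -
  let ?I = "INF f\<in>F. \<Sum>t<length h. logloss (f (fst (h!t))) (snd (snd (h!t)))"
  have "ereal (A - B) \<le> ?I"
  proof (rule INF_greatest)
    fix f assume "f \<in> F"
    from le[OF this] show "ereal (A - B) \<le> (\<Sum>t<length h. logloss (f (fst (h!t))) (snd (snd (h!t))))"
      by (cases "(\<Sum>t<length h. logloss (f (fst (h!t))) (snd (snd (h!t))))") auto
  qed
  then show ?thesis unfolding regret_def A
    by (cases ?I) auto
qed

lemma trunc:
  assumes "0 < \<gamma>" "\<gamma> < 1" "0 \<le> v" "v \<le> 1" "0 \<le> e" "e \<le> 1" "\<bar>e - v\<bar> \<le> \<gamma>/2"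
  shows "(1 - \<gamma>) * Pr v y \<le> Pr ((1 - \<gamma>) * e + \<gamma>/2) y"
proof -
  have d: "v \<le> e + \<gamma>/2" "e \<le> v + \<gamma>/2" using assms(7) unfolding abs_le_iff by linarith+
  show ?thesis
proof (cases y)
  case True
  have "(1 - \<gamma>) * v \<le> (1 - \<gamma>) * (e + \<gamma>/2)" using assms d by (intro mult_left_mono) auto
  also have "\<dots> \<le> (1 - \<gamma>) * e + \<gamma>/2" using assms by (simp add: algebra_simps)
  finally show ?thesis using True by (simp add: Pr_def)
next
  case False
  have "(1 - \<gamma>) * (1 - v) \<le> (1 - \<gamma>) * (1 - e + \<gamma>/2)" using assms d by (intro mult_left_mono) auto
  also have "\<dots> \<le> 1 - ((1 - \<gamma>) * e + \<gamma>/2)" using assms by (simp add: algebra_simps)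
  finally show ?thesis using False by (simp add: Pr_def)
qed
qed



lemma term_bound:
  assumes "0 < \<gamma>" "\<gamma> < 1" "0 \<le> v" "v \<le> 1" "0 \<le> e" "e \<le> 1" "\<bar>e - v\<bar> \<le> \<gamma>/2"
  shows "ereal (- ln (Pr ((1 - \<gamma>) * e + \<gamma>/2) y)) \<le> ereal (- ln (1 - \<gamma>)) + logloss v y"
proof (cases "Pr v y = 0")
  case True then show ?thesis by (simp add: logloss_alt)
next
  case False
  have "0 \<le> Pr v y" using assms unfolding Pr_def by auto
  with False have pv: "0 < Pr v y" by simp
  have tr: "(1 - \<gamma>) * Pr v y \<le> Pr ((1 - \<gamma>) * e + \<gamma>/2) y" by (rule trunc[OF assms])
  have pos: "0 < (1 - \<gamma>) * Pr v y" using pv assms by simp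
  have "ln ((1 - \<gamma>) * Pr v y) \<le> ln (Pr ((1 - \<gamma>) * e + \<gamma>/2) y)"
    using tr pos by simp
  moreover have "ln ((1 - \<gamma>) * Pr v y) = ln (1 - \<gamma>) + ln (Pr v y)"
    using pv assms by (simp add: ln_mult)
  ultimately show ?thesis using False by (simp add: logloss_alt)
qed

lemma upper_bound:
  assumes rng: "\<forall>f\<in>F. \<forall>x\<in>X. 0 \<le> f x \<and> f x \<le> 1"
    and g: "0 < \<gamma>" "\<gamma> < 1" and fat: "fat_finite F X (\<gamma>/6)"
  shows "minimax_regret X F n \<le> ereal (real (Dim F X (\<gamma>/6)) * ln (real ((n+1) * (nat \<lceil>1/(\<gamma>/6)\<rceil> + 1)))
            + real n * (- ln (1-\<gamma>)))"
proof -
  define \<beta> where "\<beta> = \<gamma>/6"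
  define J where "J = nat \<lceil>1/\<beta>\<rceil>"
  define D0 where "D0 = Dim F X \<beta>"
  define I where "I = {L :: (nat\<times>nat) list. set L \<subseteq> {..n} \<times> {..J} \<and> length L = D0}"
  define ep where "ep L h x = (1-\<gamma>) * pred F X \<beta> (map_of L) (map fst h) x + \<gamma>/2" for L and h :: "'a hist" and x :: 'a
  have b: "\<beta> > 0" using g by (simp add: \<beta>_def)
  have fat': "fat_finite F X \<beta>" using fat by (simp add: \<beta>_def)
  have finI: "finite I" unfolding I_def by (rule finite_lists_length_eq) simp
  have cardI: "card I = ((n+1)*(J+1))^D0" unfolding I_def
    by (subst card_lists_length_eq) (simp_all add: card_cartesian_product)
  have neI: "I \<noteq> {}"
  proof -
    have "replicate D0 (0,0) \<in> I" unfolding I_def by auto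
    then show ?thesis by auto
  qed
  have prr: "0 \<le> pred F X \<beta> m xs x \<and> pred F X \<beta> m xs x \<le> 1" for m xs x
    by (rule pred_range2[OF b])
  interpret M: mixture I ep "\<gamma>/2"
  proof
    show "finite I" "I \<noteq> {}" "0 < \<gamma>/2" by (fact finI, fact neI) (use g in simp)
    fix L and h :: "'a hist" and x :: 'a
    have "0 \<le> (1-\<gamma>) * pred F X \<beta> (map_of L) (map fst h) x" using prr g by simp
    moreover have "(1-\<gamma>) * pred F X \<beta> (map_of L) (map fst h) x \<le> (1-\<gamma>) * 1"
      using prr g by (intro mult_left_mono) auto
    ultimately show "\<gamma>/2 \<le> ep L h x \<and> ep L h x \<le> 1 - \<gamma>/2" unfolding ep_def by simp
  qed
  define \<sigma> where "\<sigma> = sig I ep"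
  have sr: "0 \<le> \<sigma> h x \<and> \<sigma> h x \<le> 1" for h x
    using M.sig_range[of h x] g unfolding \<sigma>_def by auto
  define B where "B = ln (real (card I)) + real n * (- ln (1-\<gamma>))"
  have reg: "regret F h \<le> ereal B"
    if len: "length h = n" and cons: "\<forall>i<n. fst (h!i) \<in> X \<and> fst (snd (h!i)) = \<sigma> (take i h) (fst (h!i))" for h
  proof -
    define A where "A = (\<Sum>t<length h. - ln (Pr (sig I ep (take t h) (fst (h!t))) (snd (snd (h!t)))))"
    have ppos: "0 < Pr (sig I ep (take t h) (fst (h!t))) (snd (snd (h!t)))" for t
      using M.sig_range[of "take t h" "fst (h!t)"] g unfolding Pr_def by auto
    have Aeq: "(\<Sum>t<length h. logloss (fst (snd (h!t))) (snd (snd (h!t)))) = ereal A"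
    proof -
      have "(\<Sum>t<length h. logloss (fst (snd (h!t))) (snd (snd (h!t))))
          = (\<Sum>t<length h. ereal (- ln (Pr (sig I ep (take t h) (fst (h!t))) (snd (snd (h!t))))))"
      proof (rule sum.cong)
        fix t assume "t \<in> {..<length h}"
        then have "fst (snd (h!t)) = sig I ep (take t h) (fst (h!t))" using cons len \<sigma>_def by auto
        then show "logloss (fst (snd (h!t))) (snd (snd (h!t))) = ereal (- ln (Pr (sig I ep (take t h) (fst (h!t))) (snd (snd (h!t)))))"
          using ppos[of t] by (simp add: logloss_alt)
      qed simp
      then show ?thesis unfolding A_def by (simp add: sum_ereal)
    qed
    show ?thesis
    proof (rule regret_le[OF _ Aeq])
      fix f assume f: "f \<in> F"
      define xs where "xs = map fst h"
      have xsX: "set xs \<subseteq> X"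
      proof
        fix z assume "z \<in> set xs"
        then obtain i where "i < length h" "z = fst (h!i)" unfolding xs_def by (auto simp: in_set_conv_nth)
        then show "z \<in> X" using cons len by auto
      qed
      obtain L where LI0: "set L \<subseteq> {..n} \<times> {..nat \<lceil>1/\<beta>\<rceil>}" "length L = Dim F X \<beta>"
        and Lc: "\<forall>t<n. \<bar>pred F X \<beta> (map_of L) (take t xs) (xs!t) - f (xs!t)\<bar> \<le> 3*\<beta>"
        using cover_list[OF fat' b rng f xsX] len xs_def by auto
      have LI: "L \<in> I" unfolding I_def J_def D0_def using LI0 by simp
      have mb: "A \<le> ln (real (card I)) + (\<Sum>t<length h. - ln (Pr (ep L (take t h) (fst (h!t))) (snd (snd (h!t)))))"
        unfolding A_def by (rule M.mix_bound[OF LI])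
      have tb: "ereal (- ln (Pr (ep L (take t h) (fst (h!t))) (snd (snd (h!t)))))
          \<le> ereal (- ln (1 - \<gamma>)) + logloss (f (fst (h!t))) (snd (snd (h!t)))" if t: "t < length h" for t
      proof -
        have e1: "ep L (take t h) (fst (h!t)) = (1-\<gamma>) * pred F X \<beta> (map_of L) (take t xs) (xs!t) + \<gamma>/2"
          unfolding ep_def xs_def using t by (simp add: take_map)
        have xt: "xs!t = fst (h!t)" using t unfolding xs_def by simp
        have fr: "0 \<le> f (fst (h!t))" "f (fst (h!t)) \<le> 1" using rng f cons t len by auto
        have cl: "\<bar>pred F X \<beta> (map_of L) (take t xs) (xs!t) - f (fst (h!t))\<bar> \<le> \<gamma>/2"
          using Lc t len xt by (auto simp: \<beta>_def)
        show ?thesis unfolding e1 xt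
          by (rule term_bound[OF g fr]) (use prr cl[unfolded xt] in auto)
      qed
      have "ereal (\<Sum>t<length h. - ln (Pr (ep L (take t h) (fst (h!t))) (snd (snd (h!t)))))
          = (\<Sum>t<length h. ereal (- ln (Pr (ep L (take t h) (fst (h!t))) (snd (snd (h!t))))))"
        by (simp add: sum_ereal)
      also have "\<dots> \<le> (\<Sum>t<length h. ereal (- ln (1 - \<gamma>)) + logloss (f (fst (h!t))) (snd (snd (h!t))))"
        by (rule sum_mono) (use tb in auto)
      also have "\<dots> = ereal (real n * (- ln (1 - \<gamma>))) + (\<Sum>t<length h. logloss (f (fst (h!t))) (snd (snd (h!t))))"
        using len by (simp add: sum.distrib sum_ereal[symmetric])
      finally have s2: "ereal (\<Sum>t<length h. - ln (Pr (ep L (take t h) (fst (h!t))) (snd (snd (h!t)))))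
          \<le> ereal (real n * (- ln (1 - \<gamma>))) + (\<Sum>t<length h. logloss (f (fst (h!t))) (snd (snd (h!t))))" .
      have "ereal A \<le> ereal (ln (real (card I))) + ereal (\<Sum>t<length h. - ln (Pr (ep L (take t h) (fst (h!t))) (snd (snd (h!t)))))"
        using mb by simp
      also have "\<dots> \<le> ereal (ln (real (card I))) + (ereal (real n * (- ln (1 - \<gamma>))) + (\<Sum>t<length h. logloss (f (fst (h!t))) (snd (snd (h!t)))))"
        by (rule add_left_mono[OF s2])
      also have "\<dots> = (\<Sum>t<length h. logloss (f (fst (h!t))) (snd (snd (h!t)))) + (ereal (ln (real (card I))) + ereal (real n * (- ln (1 - \<gamma>))))"
        by (simp only: add_ac)
      also have "\<dots> = (\<Sum>t<length h. logloss (f (fst (h!t))) (snd (snd (h!t)))) + ereal B"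
        unfolding B_def plus_ereal.simps(1) ..
      finally show "ereal A \<le> (\<Sum>t<length h. logloss (f (fst (h!t))) (snd (snd (h!t)))) + ereal B" .
    qed
  qed
  have "game_val X F n [] \<le> ereal B"
    by (rule game_upper[where \<sigma>=\<sigma>, OF sr reg]) auto
  moreover have "ln (real (card I)) = real D0 * ln (real ((n+1)*(J+1)))"
    unfolding cardI by (simp add: ln_realpow)
  ultimately show ?thesis unfolding minimax_regret_def B_def D0_def J_def \<beta>_def by simp
qed



lemma local_ineq:
  fixes A lT lF a b :: ereal and p C cT cF K \<kappa> :: real
  assumes p: "0 \<le> p" "p \<le> 1" and A: "A \<noteq> -\<infinity>" and lT: "lT \<noteq> -\<infinity>" and lF: "lF \<noteq> -\<infinity>"
   and ha: "0 < p \<Longrightarrow> A + lT + ereal (K - C - cT) \<le> a"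
   and hb: "p < 1 \<Longrightarrow> A + lF + ereal (K - C - cF) \<le> b"
   and g: "ereal (p * cT + (1-p) * cF + \<kappa>) \<le> ereal p * lT + ereal (1-p) * lF"
  shows "A + ereal (K - C + \<kappa>) \<le> ereal p * a + ereal (1-p) * b"
proof -
  have a1: "ereal p * (A + lT + ereal (K - C - cT)) \<le> ereal p * a"
  proof (cases "p = 0")
    case True then show ?thesis by (simp flip: zero_ereal_def)
  next
    case False then show ?thesis using ha p by (intro ereal_mult_left_mono) auto
  qed
  have b1: "ereal (1-p) * (A + lF + ereal (K - C - cF)) \<le> ereal (1-p) * b"
  proof (cases "p = 1")
    case True then show ?thesis by (simp flip: zero_ereal_def)
  next
    case False then show ?thesis using hb p by (intro ereal_mult_left_mono) auto
  qed
  have main: "A + ereal (K - C + \<kappa>) \<le> ereal p * (A + lT + ereal (K - C - cT)) + ereal (1-p) * (A + lF + ereal (K - C - cF))"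
  proof (cases "p = 0")
    case True
    then have "ereal (cF + \<kappa>) \<le> lF" using g by (simp flip: zero_ereal_def)
    then show ?thesis using True A lF by (cases A; cases lF) (auto simp flip: zero_ereal_def)
  next
    case p0: False
    show ?thesis
    proof (cases "p = 1")
      case True
      then have "ereal (cT + \<kappa>) \<le> lT" using g by (simp flip: zero_ereal_def)
      then show ?thesis using True A lT by (cases A; cases lT) (auto simp flip: zero_ereal_def)
    next
      case p1: False
      have pp: "0 < p" "p < 1" using p p0 p1 by auto
      show ?thesis
      proof (cases "A = \<infinity> \<or> lT = \<infinity> \<or> lF = \<infinity>")
        case True
        have e1: "ereal p * (A + lT + ereal (K - C - cT)) \<noteq> -\<infinity>" using A lT pp
          by (cases A; cases lT) (auto simp: ereal_mult_eq_MInfty)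
        have e2: "ereal (1-p) * (A + lF + ereal (K - C - cF)) \<noteq> -\<infinity>" using A lF pp
          by (cases A; cases lF) (auto simp: ereal_mult_eq_MInfty)
        have "ereal p * (A + lT + ereal (K - C - cT)) = \<infinity> \<or> ereal (1-p) * (A + lF + ereal (K - C - cF)) = \<infinity>"
          using True A lT lF pp by (cases A; cases lT; cases lF) (auto simp: ereal_mult_eq_PInfty)
        then have inf: "ereal p * (A + lT + ereal (K - C - cT)) + ereal (1-p) * (A + lF + ereal (K - C - cF)) = \<infinity>"
          using e1 e2 by auto
        show ?thesis unfolding inf by simp
      next
        case False
        then obtain \<alpha> u w where abs: "A = ereal \<alpha>" "lT = ereal u" "lF = ereal w"
          using A lT lF by (cases A; cases lT; cases lF) auto
        have gr: "p * cT + (1-p) * cF + \<kappa> \<le> p * u + (1-p) * w" using g abs by simp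
        have "\<alpha> + (K - C + \<kappa>) \<le> p * (\<alpha> + u + (K - C - cT)) + (1-p) * (\<alpha> + w + (K - C - cF))"
          using gr by (simp add: algebra_simps)
        then show ?thesis using abs by simp
      qed
    qed
  qed
  show ?thesis using main a1 b1 by (meson add_mono order_trans)
qed



definition lossum :: "'a hist \<Rightarrow> ereal" where
  "lossum h = (\<Sum>t<length h. logloss (fst (snd (h!t))) (snd (snd (h!t))))"

definition Cs :: "('a hist \<Rightarrow> real) \<Rightarrow> ('a hist \<Rightarrow> real) \<Rightarrow> 'a hist \<Rightarrow> real" where
  "Cs cT cF h = (\<Sum>t<length h. if snd (snd (h!t)) then cT (take t h) else cF (take t h))"

definition reach :: "('a hist \<Rightarrow> 'a) \<Rightarrow> ('a hist \<Rightarrow> real) \<Rightarrow> 'a hist \<Rightarrow> bool" where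
  "reach xa pa h \<longleftrightarrow> (\<forall>t<length h. fst (h!t) = xa (take t h) \<and>
      (snd (snd (h!t)) \<longrightarrow> 0 < pa (take t h)) \<and> (\<not> snd (snd (h!t)) \<longrightarrow> pa (take t h) < 1))"

lemma lossum_snoc: "lossum (h @ [(x, yh, y)]) = lossum h + logloss yh y"
  unfolding lossum_def by (simp add: nth_append)

lemma Cs_snoc: "Cs cT cF (h @ [(x, yh, y)]) = Cs cT cF h + (if y then cT h else cF h)"
  unfolding Cs_def by (auto simp: nth_append intro!: sum.cong)

lemma reach_snoc: "reach xa pa h \<Longrightarrow> x = xa h \<Longrightarrow> (y \<longrightarrow> 0 < pa h) \<Longrightarrow> (\<not> y \<longrightarrow> pa h < 1)
   \<Longrightarrow> reach xa pa (h @ [(x, yh, y)])"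
  unfolding reach_def by (auto simp: nth_append less_Suc_eq)

lemma logloss_not_minf: "logloss q y \<noteq> -\<infinity>"
  unfolding logloss_def by auto

lemma sum_not_minf: "(\<And>x. x \<in> A \<Longrightarrow> f x \<noteq> -\<infinity>) \<Longrightarrow> sum f A \<noteq> (-\<infinity>::ereal)"
  by (induction A rule: infinite_finite_induct) (auto simp: ereal_plus_eq_MInfty)

lemma lossum_not_minf: "lossum h \<noteq> -\<infinity>"
  unfolding lossum_def by (rule sum_not_minf) (rule logloss_not_minf)

lemma adversary:
  fixes xa :: "'a hist \<Rightarrow> 'a" and pa cT cF :: "'a hist \<Rightarrow> real" and \<kappa> :: real
  assumes xa: "\<And>h. xa h \<in> X" and pa: "\<And>h. 0 \<le> pa h \<and> pa h \<le> 1"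
   and gibbs: "\<And>h yh. 0 \<le> yh \<Longrightarrow> yh \<le> 1 \<Longrightarrow> ereal (pa h * cT h + (1 - pa h) * cF h + \<kappa>)
        \<le> ereal (pa h) * logloss yh True + ereal (1 - pa h) * logloss yh False"
   and fin: "\<And>h. length h = n \<Longrightarrow> reach xa pa h \<Longrightarrow> lossum h + ereal (- Cs cT cF h) \<le> regret F h"
  shows "length h + k = n \<Longrightarrow> reach xa pa h \<Longrightarrow> lossum h + ereal (real k * \<kappa> - Cs cT cF h) \<le> game_val X F k h"
proof (induction k arbitrary: h)
  case 0
  then show ?case using fin by simp
next
  case (Suc k)
  let ?x = "xa h" and ?p = "pa h"
  have "lossum h + ereal (real (Suc k) * \<kappa> - Cs cT cF h) \<le>
     (INF yh\<in>{0..1}. SUP p\<in>{0..1}. ereal p * game_val X F k (h @ [(?x, yh, True)]) +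
        ereal (1 - p) * game_val X F k (h @ [(?x, yh, False)]))"
  proof (rule INF_greatest)
    fix yh :: real assume yh: "yh \<in> {0..1}"
    let ?a = "game_val X F k (h @ [(?x, yh, True)])" and ?b = "game_val X F k (h @ [(?x, yh, False)])"
    have ha: "lossum h + logloss yh True + ereal (real k * \<kappa> - Cs cT cF h - cT h) \<le> ?a" if "0 < ?p"
    proof -
      have "lossum (h @ [(?x, yh, True)]) + ereal (real k * \<kappa> - Cs cT cF (h @ [(?x, yh, True)])) \<le> ?a"
        by (rule Suc.IH) (use Suc.prems that in \<open>auto intro: reach_snoc\<close>)
      then show ?thesis by (simp add: lossum_snoc Cs_snoc algebra_simps)
    qed
    have hb: "lossum h + logloss yh False + ereal (real k * \<kappa> - Cs cT cF h - cF h) \<le> ?b" if "?p < 1"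
    proof -
      have "lossum (h @ [(?x, yh, False)]) + ereal (real k * \<kappa> - Cs cT cF (h @ [(?x, yh, False)])) \<le> ?b"
        by (rule Suc.IH) (use Suc.prems that in \<open>auto intro: reach_snoc\<close>)
      then show ?thesis by (simp add: lossum_snoc Cs_snoc algebra_simps)
    qed
    have li: "lossum h + ereal (real k * \<kappa> - Cs cT cF h + \<kappa>) \<le> ereal ?p * ?a + ereal (1 - ?p) * ?b"
      by (rule local_ineq[OF _ _ lossum_not_minf logloss_not_minf logloss_not_minf ha hb gibbs])
        (use pa yh in auto)
    have "lossum h + ereal (real (Suc k) * \<kappa> - Cs cT cF h) \<le> ereal ?p * ?a + ereal (1 - ?p) * ?b"
      using li by (simp add: algebra_simps)
    also have "\<dots> \<le> (SUP p\<in>{0..1}. ereal p * ?a + ereal (1 - p) * ?b)"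
      by (rule SUP_upper) (use pa in auto)
    finally show "lossum h + ereal (real (Suc k) * \<kappa> - Cs cT cF h) \<le> (SUP p\<in>{0..1}. ereal p * ?a + ereal (1 - p) * ?b)" .
  qed
  also have "\<dots> \<le> game_val X F (Suc k) h"
    unfolding game_val.simps by (rule SUP_upper) (rule xa)
  finally show ?case .
qed

lemma logloss_nonneg: "0 \<le> q \<Longrightarrow> q \<le> 1 \<Longrightarrow> 0 \<le> logloss q y"
  unfolding logloss_def by auto

lemma gibbs:
  assumes p: "0 \<le> p" "p \<le> 1" and q: "0 \<le> q" "q \<le> 1"
  shows "ereal (- p * ln p - (1 - p) * ln (1 - p)) \<le> ereal p * logloss q True + ereal (1 - p) * logloss q False"
proof -
  consider "p = 0" | "p = 1" | "0 < p" "p < 1" using p by linarith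
  then show ?thesis
  proof cases
    case 1
    then show ?thesis using logloss_nonneg[OF q] by (simp flip: zero_ereal_def)
  next
    case 2
    then show ?thesis using logloss_nonneg[OF q] by (simp flip: zero_ereal_def)
  next
    case 3
    have n1: "0 \<le> ereal p * logloss q True" "0 \<le> ereal (1-p) * logloss q False"
      using 3 logloss_nonneg[OF q] by simp_all
    consider "q = 0" | "q = 1" | "0 < q" "q < 1" using q by linarith
    then show ?thesis
    proof cases
      case 1
      then have inf: "ereal p * logloss q True = \<infinity>" using 3 by (simp add: logloss_def)
      have s: "ereal p * logloss q True + ereal (1-p) * logloss q False = \<infinity>"
        unfolding inf using n1(2) by (cases "ereal (1-p) * logloss q False") auto
      show ?thesis unfolding s by simp
    next
      case 2
      then have inf: "ereal (1-p) * logloss q False = \<infinity>" using 3 by (simp add: logloss_def)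
      have s: "ereal p * logloss q True + ereal (1-p) * logloss q False = \<infinity>"
        unfolding inf using n1(1) by (cases "ereal p * logloss q True") auto
      show ?thesis unfolding s by simp
    next
      case q3: 3
      have e1: "ln (q / p) \<le> q / p - 1" using q3 3 by (intro ln_le_minus_one) simp
      have e2: "ln ((1-q) / (1-p)) \<le> (1-q) / (1-p) - 1" using q3 3 by (intro ln_le_minus_one) simp
      have e1': "p * (ln q - ln p) \<le> q - p"
      proof -
        have "p * ln (q / p) \<le> p * (q / p - 1)" using mult_left_mono[OF e1, of p] 3 by simp
        moreover have "p * (q / p - 1) = q - p" using 3 by (simp add: field_simps)
        moreover have "ln (q / p) = ln q - ln p" using 3 q3 by (simp add: ln_div)
        ultimately show ?thesis by simp
      qed
      have e2': "(1-p) * (ln (1-q) - ln (1-p)) \<le> (1-q) - (1-p)"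
      proof -
        have "(1-p) * ln ((1-q) / (1-p)) \<le> (1-p) * ((1-q) / (1-p) - 1)" using mult_left_mono[OF e2, of "1-p"] 3 by simp
        moreover have "(1-p) * ((1-q) / (1-p) - 1) = (1-q) - (1-p)" using 3 by (simp add: field_simps)
        moreover have "ln ((1-q) / (1-p)) = ln (1-q) - ln (1-p)" using 3 q3 by (simp add: ln_div)
        ultimately show ?thesis by simp
      qed
      have "- p * ln p - (1 - p) * ln (1 - p) \<le> p * (- ln q) + (1-p) * (- ln (1-q))"
        using e1' e2' by (simp add: algebra_simps)
      then show ?thesis using q3 by (simp add: logloss_def)
    qed
  qed
qed



lemma regret_ge_comp:
  assumes "f \<in> F" "(\<Sum>t<length h. logloss (f (fst (h!t))) (snd (snd (h!t)))) \<le> ereal c"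
  shows "lossum h + ereal (- c) \<le> regret F h"
proof -
  let ?I = "INF f\<in>F. \<Sum>t<length h. logloss (f (fst (h!t))) (snd (snd (h!t)))"
  have "?I \<le> ereal c" using assms by (meson INF_lower order_trans)
  then show ?thesis unfolding regret_def lossum_def[symmetric] using lossum_not_minf[of h]
    by (cases ?I; cases "lossum h") auto
qed

lemma sum_ll_le:
  assumes "\<And>t. t < length h \<Longrightarrow> logloss (f (fst (h!t))) (snd (snd (h!t))) \<le> ereal (if snd (snd (h!t)) then cT (take t h) else cF (take t h))"
  shows "(\<Sum>t<length h. logloss (f (fst (h!t))) (snd (snd (h!t)))) \<le> ereal (Cs cT cF h)"
proof -
  have "(\<Sum>t<length h. logloss (f (fst (h!t))) (snd (snd (h!t))))
      \<le> (\<Sum>t<length h. ereal (if snd (snd (h!t)) then cT (take t h) else cF (take t h)))"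
    by (rule sum_mono) (use assms in auto)
  also have "\<dots> = ereal (Cs cT cF h)" unfolding Cs_def by (simp only: sum_ereal)
  finally show ?thesis .
qed

lemma V_nonneg:
  fixes X :: "'a set" and F :: "('a \<Rightarrow> real) set"
  assumes x0: "x0 \<in> X" and f0: "f0 \<in> F" and rng: "\<forall>f\<in>F. \<forall>x\<in>X. 0 \<le> f x \<and> f x \<le> 1"
  shows "0 \<le> minimax_regret X F n"
proof -
  define q where "q = f0 x0"
  have q: "0 \<le> q" "q \<le> 1" using rng f0 x0 by (auto simp: q_def)
  define cT :: "'a hist \<Rightarrow> real" where "cT = (\<lambda>_. - ln q)"
  define cF :: "'a hist \<Rightarrow> real" where "cF = (\<lambda>_. - ln (1 - q))"
  have "lossum ([] :: 'a hist) + ereal (real n * 0 - Cs cT cF []) \<le> game_val X F n []"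
  proof (rule adversary[where xa="\<lambda>_. x0" and pa="\<lambda>_. q" and cT=cT and cF=cF and \<kappa>=0 and n=n and k=n and h="[]"])
    show "\<And>h. x0 \<in> X" by (fact x0)
    show "\<And>h. 0 \<le> q \<and> q \<le> 1" using q by simp
    fix h :: "'a hist" and yh :: real assume yh: "0 \<le> yh" "yh \<le> 1"
    have "q * cT h + (1 - q) * cF h + 0 = - q * ln q - (1 - q) * ln (1 - q)" unfolding cT_def cF_def by simp
    then show "ereal (q * cT h + (1 - q) * cF h + 0) \<le> ereal q * logloss yh True + ereal (1 - q) * logloss yh False"
      using gibbs[OF q yh] by simp
  next
    fix h :: "'a hist" assume len: "length h = n" and r: "reach (\<lambda>_. x0) (\<lambda>_. q) h"
    show "lossum h + ereal (- Cs cT cF h) \<le> regret F h"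
    proof (rule regret_ge_comp[OF f0 sum_ll_le])
      fix t assume t: "t < length h"
      have xt: "fst (h!t) = x0" and yq: "snd (snd (h!t)) \<longrightarrow> 0 < q" "\<not> snd (snd (h!t)) \<longrightarrow> q < 1"
        using r t unfolding reach_def by auto
      show "logloss (f0 (fst (h!t))) (snd (snd (h!t))) \<le> ereal (if snd (snd (h!t)) then cT (take t h) else cF (take t h))"
        using yq unfolding xt q_def[symmetric] cT_def cF_def by (auto simp: logloss_def)
    qed
  qed (simp_all add: reach_def)
  then show ?thesis unfolding minimax_regret_def by (simp add: lossum_def Cs_def zero_ereal_def)
qed

lemma kl_gap:
  fixes \<beta> s :: real
  assumes b: "0 < \<beta>" and s: "\<beta>/2 \<le> s" "s \<le> 1 - \<beta>/2"
  shows "\<beta>/2 \<le> s * (ln (s + \<beta>/2) - ln s) + (1 - s) * (ln (1 - s + \<beta>/2) - ln (1 - s))"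
proof -
  define a where "a = \<beta>/2"
  have a: "0 < a" "a \<le> s" "s \<le> 1 - a" using assms by (auto simp: a_def)
  have g: "a \<le> ln (u + a) - ln u" if u: "0 < u" "u + a \<le> 1" for u
  proof -
    have "ln (u / (u + a)) \<le> u / (u + a) - 1" using u a by (intro ln_le_minus_one) simp
    also have "\<dots> = - a / (u + a)" using u a by (simp add: field_simps)
    also have "\<dots> \<le> - a"
    proof -
      have "a \<le> a / (u + a)" using u a by (simp add: le_divide_eq)
      then show ?thesis by simp
    qed
    finally have "ln (u / (u + a)) \<le> - a" .
    moreover have "ln (u / (u + a)) = ln u - ln (u + a)" using u a by (simp add: ln_div)
    ultimately show ?thesis by simp
  qed
  have "s * a \<le> s * (ln (s + a) - ln s)" using g[of s] a by (intro mult_left_mono) auto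
  moreover have "(1 - s) * a \<le> (1 - s) * (ln (1 - s + a) - ln (1 - s))" using g[of "1 - s"] a by (intro mult_left_mono) auto
  ultimately show ?thesis unfolding a_def[symmetric] by (simp add: algebra_simps)
qed



lemma V_tree:
  fixes X :: "'a set" and F :: "('a \<Rightarrow> real) set"
  assumes x0: "x0 \<in> X" and rng: "\<forall>f\<in>F. \<forall>x\<in>X. 0 \<le> f x \<and> f x \<le> 1"
    and b: "0 < \<beta>" and sh: "seq_shatters F X \<beta> d" and nd: "n \<le> d"
  shows "ereal (real n * (\<beta>/2)) \<le> minimax_regret X F n"
proof -
  from sh obtain xt st where XT: "\<forall>ys. length ys < d \<longrightarrow> xt ys \<in> X"
    and ST: "\<forall>y. length y = d \<longrightarrow>
           (\<exists>f\<in>F. \<forall>t<d. (if y ! t then 1 else -1) * (f (xt (take t y)) - st (take t y)) \<ge> \<beta> / 2)"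
    unfolding seq_shatters_def by blast
  have node: "\<beta>/2 \<le> st ys \<and> st ys \<le> 1 - \<beta>/2" if ys: "length ys < d" for ys
  proof -
    define t where "t = length ys"
    have yT: "length (ys @ [True] @ replicate (d - t - 1) False) = d" using ys by (simp add: t_def)
    have yF: "length (ys @ [False] @ replicate (d - t - 1) False) = d" using ys by (simp add: t_def)
    obtain f1 where f1: "f1 \<in> F" "\<forall>t'<d. (if (ys @ [True] @ replicate (d - t - 1) False) ! t' then 1 else -1) *
        (f1 (xt (take t' (ys @ [True] @ replicate (d - t - 1) False))) - st (take t' (ys @ [True] @ replicate (d - t - 1) False))) \<ge> \<beta> / 2"
      using ST yT by blast
    obtain f2 where f2: "f2 \<in> F" "\<forall>t'<d. (if (ys @ [False] @ replicate (d - t - 1) False) ! t' then 1 else -1) *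
        (f2 (xt (take t' (ys @ [False] @ replicate (d - t - 1) False))) - st (take t' (ys @ [False] @ replicate (d - t - 1) False))) \<ge> \<beta> / 2"
      using ST yF by blast
    have td: "t < d" using ys t_def by simp
    have a1: "f1 (xt ys) - st ys \<ge> \<beta>/2" using f1(2)[rule_format, OF td] by (simp add: t_def)
    have a2: "- (f2 (xt ys) - st ys) \<ge> \<beta>/2" using f2(2)[rule_format, OF td] by (simp add: t_def)
    have "xt ys \<in> X" using XT ys by blast
    then have "f1 (xt ys) \<le> 1" "0 \<le> f2 (xt ys)" using rng f1(1) f2(1) by auto
    then show ?thesis using a1 a2 by linarith
  qed
  show ?thesis
  proof (cases "n = 0")
    case True
    then show ?thesis using V_nonneg[OF x0] sh rng
      by (metis (no_types) mult_zero_left of_nat_0 shatters_empty zero_ereal_def all_not_in_conv)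
  next
    case False
    then have d0: "0 < d" using nd by simp
    have b1: "\<beta> \<le> 1" using node[of "[]"] d0 by simp
    define ysh :: "'a hist \<Rightarrow> bool list" where "ysh h = map (snd \<circ> snd) h" for h
    define pa :: "'a hist \<Rightarrow> real" where "pa h = (if length h < n then st (ysh h) else 1/2)" for h
    define xa :: "'a hist \<Rightarrow> 'a" where "xa h = (if length h < n then xt (ysh h) else x0)" for h
    define cT :: "'a hist \<Rightarrow> real" where "cT h = - ln (pa h + \<beta>/2)" for h
    define cF :: "'a hist \<Rightarrow> real" where "cF h = - ln (1 - pa h + \<beta>/2)" for h
    have par: "\<beta>/2 \<le> pa h \<and> pa h \<le> 1 - \<beta>/2" for h
      using node[of "ysh h"] nd b1 unfolding pa_def ysh_def by auto
    have "lossum ([] :: 'a hist) + ereal (real n * (\<beta>/2) - Cs cT cF []) \<le> game_val X F n []"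
    proof (rule adversary[where xa=xa and pa=pa and cT=cT and cF=cF and \<kappa>="\<beta>/2" and n=n and k=n and h="[]"])
      show "xa h \<in> X" for h using XT nd x0 unfolding xa_def ysh_def by auto
      show "0 \<le> pa h \<and> pa h \<le> 1" for h using par[of h] b by auto
      fix h :: "'a hist" and yh :: real assume yh: "0 \<le> yh" "yh \<le> 1"
      have p: "0 \<le> pa h" "pa h \<le> 1" using par[of h] b by auto
      have "pa h * cT h + (1 - pa h) * cF h + \<beta>/2 \<le> - pa h * ln (pa h) - (1 - pa h) * ln (1 - pa h)"
        using kl_gap[OF b par[of h, THEN conjunct1] par[of h, THEN conjunct2]]
        unfolding cT_def cF_def by (simp add: algebra_simps)
      then show "ereal (pa h * cT h + (1 - pa h) * cF h + \<beta>/2) \<le> ereal (pa h) * logloss yh True + ereal (1 - pa h) * logloss yh False"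
        using gibbs[OF p yh] by (meson ereal_less_eq(3) order_trans)
    next
      fix h :: "'a hist" assume len: "length h = n" and r: "reach xa pa h"
      define yy where "yy = ysh h @ replicate (d - n) False"
      have lyy: "length yy = d" using len nd by (simp add: yy_def ysh_def)
      obtain f where f: "f \<in> F" "\<forall>t<d. (if yy ! t then 1 else -1) * (f (xt (take t yy)) - st (take t yy)) \<ge> \<beta> / 2"
        using ST lyy by blast
      show "lossum h + ereal (- Cs cT cF h) \<le> regret F h"
      proof (rule regret_ge_comp[OF f(1) sum_ll_le])
        fix t assume t: "t < length h"
        have tn: "t < n" using t len by simp
        have tk: "take t yy = ysh (take t h)" using t unfolding yy_def ysh_def by (simp add: take_map)
        have yt: "yy ! t = snd (snd (h!t))" using t unfolding yy_def ysh_def by (simp add: nth_append)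
        have lt: "length (take t h) < n" using tn t by simp
        have xh: "fst (h!t) = xt (take t yy)" using r t lt unfolding reach_def xa_def tk by auto
        have ph: "pa (take t h) = st (take t yy)" using lt unfolding pa_def tk by simp
        have ft: "(if yy ! t then 1 else -1) * (f (xt (take t yy)) - st (take t yy)) \<ge> \<beta> / 2"
          using f(2) tn nd by simp
        have fr: "0 \<le> f (fst (h!t))" "f (fst (h!t)) \<le> 1"
          using rng f(1) XT xh tk lyy tn nd by (auto simp: ysh_def)
        show "logloss (f (fst (h!t))) (snd (snd (h!t))) \<le> ereal (if snd (snd (h!t)) then cT (take t h) else cF (take t h))"
        proof (cases "snd (snd (h!t))")
          case True
          have g: "pa (take t h) + \<beta>/2 \<le> f (fst (h!t))" using ft True yt xh ph by simp
          have pos: "0 < pa (take t h) + \<beta>/2" using par[of "take t h"] b by linarith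
          have "ln (pa (take t h) + \<beta>/2) \<le> ln (f (fst (h!t)))" using g pos by simp
          then show ?thesis using True g pos by (simp add: logloss_def cT_def)
        next
          case False
          have g: "1 - pa (take t h) + \<beta>/2 \<le> 1 - f (fst (h!t))" using ft False yt xh ph by simp
          have pos: "0 < 1 - pa (take t h) + \<beta>/2" using par[of "take t h"] b by linarith
          have "ln (1 - pa (take t h) + \<beta>/2) \<le> ln (1 - f (fst (h!t)))" using g pos by simp
          moreover have "f (fst (h!t)) \<noteq> 1" using g pos by linarith
          ultimately show ?thesis using False by (simp add: logloss_def cF_def)
        qed
      qed
    qed (simp_all add: reach_def)
    then show ?thesis unfolding minimax_regret_def by (simp add: lossum_def Cs_def)
  qed
qed



lemma div_ge:
  assumes "ereal (real n * c) \<le> V" "0 < n"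
  shows "ereal c \<le> V / ereal (real n)"
proof (cases V)
  case (real r)
  then have "real n * c \<le> r" using assms by simp
  then have "c \<le> r / real n" using assms by (simp add: le_divide_eq mult.commute)
  then show ?thesis using real assms by simp
next
  case PInf then show ?thesis using assms by simp
next
  case MInf then show ?thesis using assms by simp
qed

lemma div_le:
  assumes "V \<le> ereal U" "0 < n"
  shows "V / ereal (real n) \<le> ereal (U / real n)"
proof (cases V)
  case (real r)
  then have "r \<le> U" using assms by simp
  then have "r / real n \<le> U / real n" using assms by (simp add: divide_right_mono)
  then show ?thesis using real assms by simp
next
  case PInf then show ?thesis using assms by simp
next
  case MInf then show ?thesis using assms by simp
qed

lemma div_nonneg:
  assumes "0 \<le> V" "0 < n"
  shows "0 \<le> V / ereal (real n)"
  using div_ge[of n 0 V] assms by (simp add: zero_ereal_def)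

lemma mln_bound:
  fixes \<gamma> :: real
  assumes "0 < \<gamma>" "\<gamma> \<le> 1/2"
  shows "- ln (1 - \<gamma>) \<le> 2 * \<gamma>"
proof -
  have "ln (1 / (1 - \<gamma>)) \<le> 1 / (1 - \<gamma>) - 1" using assms by (intro ln_le_minus_one) simp
  also have "\<dots> = \<gamma> / (1 - \<gamma>)" using assms by (simp add: field_simps)
  also have "\<dots> \<le> 2 * \<gamma>" using assms by (simp add: field_simps)
  finally show ?thesis using assms by (simp add: ln_div)
qed

lemma log_term_lim:
  fixes D J :: real
  shows "((\<lambda>n::nat. D * ln (real ((n+1) * k)) / real n) \<longlongrightarrow> 0) sequentially"
proof (cases "k = 0")
  case True then show ?thesis by simp
next
  case False
  have eq: "D * ln (real ((n+1) * k)) / real n = D * (ln (real n + 1) / real n) + D * ln (real k) * (1 / real n)" for n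
  proof -
    have "real ((n+1) * k) = (real n + 1) * real k" by (simp add: algebra_simps)
    then have "ln (real ((n+1) * k)) = ln ((real n + 1) * real k)" by (simp only:)
    also have "\<dots> = ln (real n + 1) + ln (real k)" using False by (intro ln_mult_pos) auto
    finally have "ln (real ((n+1) * k)) = ln (real n + 1) + ln (real k)" .
    then show ?thesis by (simp add: add_divide_distrib distrib_left)
  qed
  have l1: "((\<lambda>n::nat. ln (real n + 1) / real n) \<longlongrightarrow> 0) sequentially" by real_asymp
  have l2: "((\<lambda>n::nat. 1 / real n) \<longlongrightarrow> 0) sequentially" by real_asymp
  have "((\<lambda>n::nat. D * (ln (real n + 1) / real n) + D * ln (real k) * (1 / real n)) \<longlongrightarrow> D * 0 + D * ln (real k) * 0) sequentially"
    by (intro tendsto_intros l1 l2)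
  then show ?thesis unfolding eq by simp
qed

theorem theorem3:
  fixes X :: "'a set" and F :: "('a \<Rightarrow> real) set"
  assumes "X \<noteq> {}" and "F \<noteq> {}"
    and "\<forall>f\<in>F. \<forall>x\<in>X. 0 \<le> f x \<and> f x \<le> 1"
  shows "((\<lambda>n. minimax_regret X F n / ereal (real n)) \<longlongrightarrow> 0) sequentially
         \<longleftrightarrow> (\<forall>\<beta>>0. fat_finite F X \<beta>)"
proof -
  obtain x0 where x0: "x0 \<in> X" using assms(1) by blast
  obtain f0 where f0: "f0 \<in> F" using assms(2) by blast
  note rng = assms(3)
  have V0: "0 \<le> minimax_regret X F n" for n by (rule V_nonneg[OF x0 f0 rng])
  show ?thesis
  proof
    assume lim: "((\<lambda>n. minimax_regret X F n / ereal (real n)) \<longlongrightarrow> 0) sequentially"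
    show "\<forall>\<beta>>0. fat_finite F X \<beta>"
    proof (rule ccontr)
      assume "\<not> (\<forall>\<beta>>0. fat_finite F X \<beta>)"
      then obtain \<beta> where b: "0 < \<beta>" and nf: "\<not> fat_finite F X \<beta>" by blast
      have big: "ereal (\<beta>/2) \<le> minimax_regret X F n / ereal (real n)" if n: "0 < n" for n
      proof -
        from nf obtain d where d: "seq_shatters F X \<beta> d" "\<not> d \<le> n" unfolding fat_finite_def by blast
        have "ereal (real n * (\<beta>/2)) \<le> minimax_regret X F n"
          by (rule V_tree[OF x0 rng b d(1)]) (use d(2) in simp)
        then show ?thesis by (rule div_ge) (fact n)
      qed
      have "\<forall>\<^sub>F n in sequentially. minimax_regret X F n / ereal (real n) < ereal (\<beta>/2)"
        using lim b by (intro order_tendstoD(2)) (auto simp: zero_ereal_def)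
      moreover have "\<forall>\<^sub>F n in sequentially. (0::nat) < n" by (rule eventually_gt_at_top)
      ultimately have "\<forall>\<^sub>F n in sequentially. False"
      proof eventually_elim
        case (elim n)
        from elim(1) big[OF elim(2)] show False by (meson linorder_not_less)
      qed
      then show False by simp
    qed
  next
    assume fat: "\<forall>\<beta>>0. fat_finite F X \<beta>"
    show "((\<lambda>n. minimax_regret X F n / ereal (real n)) \<longlongrightarrow> 0) sequentially"
    proof (rule order_tendstoI)
      fix a :: ereal assume a: "a < 0"
      have "\<forall>\<^sub>F n in sequentially. (0::nat) < n" by (rule eventually_gt_at_top)
      then show "\<forall>\<^sub>F n in sequentially. a < minimax_regret X F n / ereal (real n)"
      proof eventually_elim
        case (elim n)
        have "0 \<le> minimax_regret X F n / ereal (real n)" by (rule div_nonneg[OF V0 elim])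
        with a show ?case by (rule order_less_le_trans)
      qed
    next
      fix a :: ereal assume a: "0 < a"
      define a' where "a' = (if a = \<infinity> then 1 else real_of_ereal a)"
      have a'pos: "0 < a'" and a'le: "ereal a' \<le> a"
      proof -
        have "0 < a' \<and> ereal a' \<le> a"
        proof (cases a)
          case (real r) then show ?thesis using a unfolding a'_def by simp
        next
          case PInf then show ?thesis unfolding a'_def by simp
        next
          case MInf then show ?thesis using a by simp
        qed
        then show "0 < a'" "ereal a' \<le> a" by auto
      qed
      define \<gamma> where "\<gamma> = min (1/2) (a'/4)"
      have g: "0 < \<gamma>" "\<gamma> < 1" "\<gamma> \<le> 1/2" "\<gamma> \<le> a'/4" using a'pos by (auto simp: \<gamma>_def)
      define D where "D = real (Dim F X (\<gamma>/6))"
      define k where "k = nat \<lceil>1/(\<gamma>/6)\<rceil> + 1"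
      have ub: "minimax_regret X F n \<le> ereal (D * ln (real ((n+1) * k)) + real n * (- ln (1-\<gamma>)))" for n
        unfolding D_def k_def by (rule upper_bound[OF rng g(1,2)]) (use fat g in simp)
      have ml: "- ln (1 - \<gamma>) \<le> a'/2" using mln_bound[OF g(1,3)] g(4) by simp
      have "\<forall>\<^sub>F n in sequentially. D * ln (real ((n+1) * k)) / real n < a'/2"
        using log_term_lim[of D k] a'pos by (intro order_tendstoD(2)) auto
      moreover have "\<forall>\<^sub>F n in sequentially. (0::nat) < n" by (rule eventually_gt_at_top)
      ultimately show "\<forall>\<^sub>F n in sequentially. minimax_regret X F n / ereal (real n) < a"
      proof eventually_elim
        case (elim n)
        have "minimax_regret X F n / ereal (real n) \<le> ereal ((D * ln (real ((n+1) * k)) + real n * (- ln (1-\<gamma>))) / real n)"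
          by (rule div_le[OF ub elim(2)])
        also have "(D * ln (real ((n+1) * k)) + real n * (- ln (1-\<gamma>))) / real n
            = D * ln (real ((n+1) * k)) / real n + (- ln (1-\<gamma>))"
          using elim(2) by (simp add: add_divide_distrib diff_divide_distrib)
        also have "\<dots> < a'" using elim(1) ml by linarith
        finally have "minimax_regret X F n / ereal (real n) < ereal a'" by simp
        then show ?case using a'le by (meson order_less_le_trans)
      qed
    qed
  qed
qed

end
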